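(* In the setting of the context, under (A1) and (A2), the piecewise constant discrete derivatives $\tilde w^n_x=(\tilde v^n_x,\tilde u^n_x)$ satisfy $$\|w^n_x-\tilde w^n_x\|_{L^2}=O(\varepsilon^2\Delta x),$$ where $w^n_x=(v_x(\cdot,t^n),u_x(\cdot,t^n))$ is the exact derivative.
   Context: $\Omega=[0,1]$; $(v,u)$ solves $v_t-u_x=0$, $u_t-\varepsilon^{-2}v_x=g$ on $\Omega\times\mathbb{R}^+$ with $v=0$ on $\partial\Omega$, $0<\varepsilon<1$. Uniform mesh $\Omega_i=[x_i,x_{i+1}]$, $i=1,\dots,N_x$, width $\Delta x$, midpoints $\bar x_i$; $t^n=n\Delta t$; $v_i^n=v(\bar x_i,t^n)$, $u_i^n=u(\bar x_i,t^n)$. On $\Omega_i$: $\tilde v^n_x=\frac1{2\Delta x}\big(v^n_{i+1}-v^n_{i-1}+\frac{\Delta x}{\Delta t}(u^n_{i+1}+u^n_{i-1}-2u^n_i)\big)$, $\tilde u^n_x=\frac1{2\Delta x}\big(u^n_{i+1}-u^n_{i-1}+\frac{\Delta x}{\Delta t}(v^n_{i+1}+v^n_{i-1}-2v^n_i)\big)$. (A1) $u,v$ sufficiently smooth with $v=\varepsilon^2v^{(2)}+O(\varepsilon^3)$, $u_x=\varepsilon^2u^{(2)}_x+O(\varepsilon^3)$ in the norm $\|\varphi\|_{C^1}=\|\varphi\|_\infty+\|\nabla_{x,t}\varphi\|_\infty$, with $\varepsilon$-independent smooth $v^{(2)},u^{(2)}$. (A2) $\Delta t=\widehat{\mathrm{CFL}}\,\Delta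 x$ with fixed $0<\widehat{\mathrm{CFL}}<1$. $O(\cdot)$: bounded by a constant independent of $\varepsilon,\Delta t,\Delta x$ times the expression. *)

theory Defs
  imports "HOL-Analysis.Analysis"
begin

definition pdx :: "(real \<Rightarrow> real \<Rightarrow> real) \<Rightarrow> real \<Rightarrow> real \<Rightarrow> real" where
  "pdx f x t = deriv (\<lambda>y. f y t) x"

definition pdt :: "(real \<Rightarrow> real \<Rightarrow> real) \<Rightarrow> real \<Rightarrow> real \<Rightarrow> real" where
  "pdt f x t = deriv (\<lambda>s. f x s) t"

definition C1fun :: "(real \<Rightarrow> real \<Rightarrow> real) \<Rightarrow> bool" where
  "C1fun f \<longleftrightarrow>
     (\<forall>x t. ((\<lambda>p. f (fst p) (snd p)) has_derivative
              (\<lambda>h. pdx f x t * fst h + pdt f x t * snd h)) (at (x, t))) \<and>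
     continuous_on UNIV (\<lambda>p. pdx f (fst p) (snd p)) \<and>
     continuous_on UNIV (\<lambda>p. pdt f (fst p) (snd p))"

definition C2fun :: "(real \<Rightarrow> real \<Rightarrow> real) \<Rightarrow> bool" where
  "C2fun f \<longleftrightarrow> C1fun f \<and> C1fun (pdx f) \<and> C1fun (pdt f)"

definition Dom :: "(real \<times> real) set" where
  "Dom = {0..1} \<times> {0..}"

text \<open>\<open>\<parallel>f\<parallel>_{C^1} = \<parallel>f\<parallel>_\<infinity> + \<parallel>\<nabla>f\<parallel>_\<infinity> \<le> M\<close> on \<Omega> \<times> R+.\<close>
definition C1norm_le :: "(real \<Rightarrow> real \<Rightarrow> real) \<Rightarrow> real \<Rightarrow> bool" where
  "C1norm_le f M \<longleftrightarrow> (\<exists>A B. A + B \<le> M \<and>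
     (\<forall>(x, t) \<in> Dom. \<bar>f x t\<bar> \<le> A \<and> sqrt ((pdx f x t)\<^sup>2 + (pdt f x t)\<^sup>2) \<le> B))"

text \<open>Uniform mesh of [0,1] with Nx cells; cell i = [x_i, x_{i+1}], x_i = (i-1) dx, i = 1..Nx.\<close>
definition mesh_dx :: "nat \<Rightarrow> real" where
  "mesh_dx Nx = 1 / real Nx"

definition xbar :: "nat \<Rightarrow> nat \<Rightarrow> real" where
  "xbar Nx i = (real i - 1/2) * mesh_dx Nx"

text \<open>Cell averages (midpoint values) with ghost cells i = 0 and i = Nx+1 given by
  reflection at the wall: v odd (v = 0 on the boundary), u even.\<close>
definition cell_odd :: "(real \<Rightarrow> real \<Rightarrow> real) \<Rightarrow> nat \<Rightarrow> real \<Rightarrow> nat \<Rightarrow> real" where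
  "cell_odd f Nx t i =
     (if i = 0 then - f (xbar Nx 1) t
      else if Nx < i then - f (xbar Nx Nx) t
      else f (xbar Nx i) t)"

definition cell_even :: "(real \<Rightarrow> real \<Rightarrow> real) \<Rightarrow> nat \<Rightarrow> real \<Rightarrow> nat \<Rightarrow> real" where
  "cell_even f Nx t i =
     (if i = 0 then f (xbar Nx 1) t
      else if Nx < i then f (xbar Nx Nx) t
      else f (xbar Nx i) t)"

definition vx_tilde :: "(real \<Rightarrow> real \<Rightarrow> real) \<Rightarrow> (real \<Rightarrow> real \<Rightarrow> real) \<Rightarrow> nat \<Rightarrow> real \<Rightarrow> real \<Rightarrow> nat \<Rightarrow> real" where
  "vx_tilde v u Nx dt t i =
     (cell_odd v Nx t (i+1) - cell_odd v Nx t (i-1)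
      + mesh_dx Nx / dt * (cell_even u Nx t (i+1) + cell_even u Nx t (i-1) - 2 * cell_even u Nx t i))
     / (2 * mesh_dx Nx)"

definition ux_tilde :: "(real \<Rightarrow> real \<Rightarrow> real) \<Rightarrow> (real \<Rightarrow> real \<Rightarrow> real) \<Rightarrow> nat \<Rightarrow> real \<Rightarrow> real \<Rightarrow> nat \<Rightarrow> real" where
  "ux_tilde v u Nx dt t i =
     (cell_even u Nx t (i+1) - cell_even u Nx t (i-1)
      + mesh_dx Nx / dt * (cell_odd v Nx t (i+1) + cell_odd v Nx t (i-1) - 2 * cell_odd v Nx t i))
     / (2 * mesh_dx Nx)"

text \<open>Index of the cell containing x \<in> [0,1] (the right end point is put into cell Nx).\<close>
definition cell_of :: "nat \<Rightarrow> real \<Rightarrow> nat" where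
  "cell_of Nx x = min Nx (nat \<lfloor>x * real Nx\<rfloor> + 1)"

definition L2_err :: "(real \<Rightarrow> real \<Rightarrow> real) \<Rightarrow> (real \<Rightarrow> real \<Rightarrow> real) \<Rightarrow> nat \<Rightarrow> real \<Rightarrow> real \<Rightarrow> real" where
  "L2_err v u Nx dt t = sqrt (integral {0..1} (\<lambda>x.
      (pdx v x t - vx_tilde v u Nx dt t (cell_of Nx x))\<^sup>2
    + (pdx u x t - ux_tilde v u Nx dt t (cell_of Nx x))\<^sup>2))"

end

theory Submission
  imports Defs
begin


lemma mvt_bound:
  fixes f f' :: "real \<Rightarrow> real"
  assumes d: "\<And>\<xi>. min a b \<le> \<xi> \<Longrightarrow> \<xi> \<le> max a b \<Longrightarrow> (f has_real_derivative f' \<xi>) (at \<xi>)"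
      and bd: "\<And>\<xi>. min a b \<le> \<xi> \<Longrightarrow> \<xi> \<le> max a b \<Longrightarrow> \<bar>f' \<xi>\<bar> \<le> M"
  shows "\<bar>f b - f a\<bar> \<le> M * \<bar>b - a\<bar>"
proof (cases "a = b")
  case True then show ?thesis by simp
next
  case False
  show ?thesis
  proof (cases "a < b")
    case True
    then obtain z where z: "a < z" "z < b" "f b - f a = (b - a) * f' z"
      using MVT2[of a b f f'] d by (fastforce simp: min_def max_def)
    have "\<bar>f' z\<bar> \<le> M" using bd[of z] z True by (auto simp: min_def max_def)
    then show ?thesis using z True by (simp add: abs_mult mult.commute mult_left_mono)
  next
    case False
    with \<open>a \<noteq> b\<close> have ba: "b < a" by simp
    then obtain z where z: "b < z" "z < a" "f a - f b = (a - b) * f' z"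
      using MVT2[of b a f f'] d by (fastforce simp: min_def max_def)
    have "\<bar>f' z\<bar> \<le> M" using bd[of z] z ba by (auto simp: min_def max_def)
    then have "\<bar>f a - f b\<bar> \<le> M * \<bar>a - b\<bar>" using z ba by (simp add: abs_mult mult.commute mult_left_mono)
    then show ?thesis by (simp add: abs_minus_commute)
  qed
qed

lemma deriv_right_bound:
  fixes \<phi> :: "real \<Rightarrow> real"
  assumes d: "(\<phi> has_real_derivative D) (at t)"
    and b: "\<And>s. 0 < s \<Longrightarrow> s \<le> 1 \<Longrightarrow> \<bar>\<phi> (t+s) - \<phi> t\<bar> \<le> c * s"
  shows "\<bar>D\<bar> \<le> c"
proof -
  have "((\<lambda>h. (\<phi> (t + h) - \<phi> t) / h) \<longlongrightarrow> D) (at 0)" using d by (simp add: DERIV_def)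
  then have "((\<lambda>h. (\<phi> (t + h) - \<phi> t) / h) \<longlongrightarrow> D) (at_right 0)"
    by (rule tendsto_mono[rotated]) (simp add: at_le)
  then have l: "((\<lambda>h. \<bar>(\<phi> (t + h) - \<phi> t) / h\<bar>) \<longlongrightarrow> \<bar>D\<bar>) (at_right 0)" by (rule tendsto_rabs)
  have "\<forall>\<^sub>F h in at_right 0. \<bar>(\<phi> (t + h) - \<phi> t) / h\<bar> \<le> c"
    using eventually_at_right_real[of 0 1]
  proof (rule eventually_mono)
    fix y :: real assume "y \<in> {0<..<1}"
    then show "\<bar>(\<phi> (t + y) - \<phi> t) / y\<bar> \<le> c" using b[of y] by (simp add: abs_div pos_divide_le_eq)
  qed simp
  then show ?thesis using tendsto_upperbound[OF l] by simp
qed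

lemma C1_dx:
  assumes "C1fun f" shows "((\<lambda>y. f y t) has_real_derivative pdx f x t) (at x)"
proof -
  have 1: "((\<lambda>p. f (fst p) (snd p)) has_derivative
              (\<lambda>h. pdx f x t * fst h + pdt f x t * snd h)) (at (x, t))"
    using assms by (simp add: C1fun_def)
  have 2: "((\<lambda>y. (y, t)) has_derivative (\<lambda>h. (h, 0))) (at x)"
    by (intro derivative_eq_intros) auto
  have "((\<lambda>y. f y t) has_derivative (\<lambda>h. pdx f x t * h)) (at x)"
    using diff_chain_at[OF 2, OF 1] by (simp add: o_def)
  then show ?thesis by (simp add: has_field_derivative_def mult.commute[of _ "pdt f x t"] mult.commute[of _ "pdx f x t"])
qed

lemma C1_dt:
  assumes "C1fun f" shows "((\<lambda>s. f x s) has_real_derivative pdt f x t) (at t)"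
proof -
  have 1: "((\<lambda>p. f (fst p) (snd p)) has_derivative
              (\<lambda>h. pdx f x t * fst h + pdt f x t * snd h)) (at (x, t))"
    using assms by (simp add: C1fun_def)
  have 2: "((\<lambda>s. (x, s)) has_derivative (\<lambda>h. (0, h))) (at t)"
    by (intro derivative_eq_intros) auto
  have "((\<lambda>s. f x s) has_derivative (\<lambda>h. pdt f x t * h)) (at t)"
    using diff_chain_at[OF 2, OF 1] by (simp add: o_def)
  then show ?thesis by (simp add: has_field_derivative_def mult.commute[of _ "pdt f x t"] mult.commute[of _ "pdx f x t"])
qed

lemma cont_bound:
  fixes h :: "real \<Rightarrow> real \<Rightarrow> real" and T' :: real
  assumes "continuous_on UNIV (\<lambda>p. h (fst p) (snd p))"
  shows "\<exists>B. \<forall>x t. 0\<le>x \<and> x\<le>1 \<and> 0\<le>t \<and> t\<le>T' \<longrightarrow> \<bar>h x t\<bar> \<le> B"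
proof -
  have c: "compact ({0..1::real} \<times> {0..T'})" by (intro compact_Times compact_Icc)
  have "compact ((\<lambda>p. h (fst p) (snd p)) ` ({0..1} \<times> {0..T'}))"
    by (rule compact_continuous_image) (auto intro: continuous_on_subset[OF assms] c)
  then obtain B where "\<forall>y\<in>(\<lambda>p. h (fst p) (snd p)) ` ({0..1} \<times> {0..T'}). norm y \<le> B"
    using compact_imp_bounded bounded_iff by metis
  then show ?thesis by force
qed

lemma C1norm_D:
  assumes "C1norm_le f M" "0\<le>x" "x\<le>1" "0\<le>t"
  shows "\<bar>pdx f x t\<bar> \<le> M \<and> \<bar>pdt f x t\<bar> \<le> M \<and> 0 \<le> M"
proof -
  obtain A B where AB: "A + B \<le> M" "\<forall>(x, t) \<in> Dom. \<bar>f x t\<bar> \<le> A \<and> sqrt ((pdx f x t)\<^sup>2 + (pdt f x t)\<^sup>2) \<le> B"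
    using assms(1) unfolding C1norm_le_def by blast
  have "(x,t) \<in> Dom" using assms by (simp add: Dom_def)
  then have h: "\<bar>f x t\<bar> \<le> A" "sqrt ((pdx f x t)\<^sup>2 + (pdt f x t)\<^sup>2) \<le> B" using AB(2) by auto
  have "\<bar>pdx f x t\<bar> \<le> sqrt ((pdx f x t)\<^sup>2 + (pdt f x t)\<^sup>2)" by (rule real_le_rsqrt) simp
  moreover have "\<bar>pdt f x t\<bar> \<le> sqrt ((pdx f x t)\<^sup>2 + (pdt f x t)\<^sup>2)" by (rule real_le_rsqrt) simp
  ultimately show ?thesis using h AB(1) by (smt (verit, ccfv_threshold) real_sqrt_ge_zero)
qed



lemma lip_nonneg:
  fixes F' :: "real \<Rightarrow> real"
  assumes lip: "\<And>y z. 0\<le>y \<Longrightarrow> y\<le>1 \<Longrightarrow> 0\<le>z \<Longrightarrow> z\<le>1 \<Longrightarrow> \<bar>F' z - F' y\<bar> \<le> L*\<bar>z-y\<bar>"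
  shows "0 \<le> L"
  using lip[of 0 1] by simp

lemma taylor2:
  fixes F F' :: "real \<Rightarrow> real"
  assumes d: "\<And>y. (F has_real_derivative F' y) (at y)"
   and lip: "\<And>y z. 0\<le>y \<Longrightarrow> y\<le>1 \<Longrightarrow> 0\<le>z \<Longrightarrow> z\<le>1 \<Longrightarrow> \<bar>F' z - F' y\<bar> \<le> L*\<bar>z-y\<bar>"
   and y: "0\<le>y" "y\<le>1" and z: "0\<le>z" "z\<le>1"
  shows "\<bar>F z - F y - F' y * (z-y)\<bar> \<le> L*(z-y)^2"
proof -
  have L: "0 \<le> L" by (rule lip_nonneg[OF lip])
  have "\<bar>(F z - F' y * z) - (F y - F' y * y)\<bar> \<le> (L*\<bar>z-y\<bar>) * \<bar>z-y\<bar>"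
  proof (rule mvt_bound[where f="\<lambda>\<xi>. F \<xi> - F' y * \<xi>" and f'="\<lambda>\<xi>. F' \<xi> - F' y"])
    fix \<xi> assume "min y z \<le> \<xi>" "\<xi> \<le> max y z"
    show "((\<lambda>\<xi>. F \<xi> - F' y * \<xi>) has_real_derivative F' \<xi> - F' y) (at \<xi>)"
      using d[of \<xi>] by (auto intro!: derivative_eq_intros)
  next
    fix \<xi> assume a: "min y z \<le> \<xi>" "\<xi> \<le> max y z"
    then have "\<bar>F' \<xi> - F' y\<bar> \<le> L*\<bar>\<xi>-y\<bar>" using lip[of y \<xi>] y z by (auto simp: min_def max_def split: if_splits)
    also have "\<dots> \<le> L*\<bar>z-y\<bar>" using a L by (intro mult_left_mono) (auto simp: min_def max_def split: if_splits)
    finally show "\<bar>F' \<xi> - F' y\<bar> \<le> L*\<bar>z-y\<bar>" .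
  qed
  then show ?thesis by (simp add: power2_eq_square algebra_simps)
qed

definition cellg :: "real \<Rightarrow> (real\<Rightarrow>real) \<Rightarrow> nat \<Rightarrow> nat \<Rightarrow> real" where
 "cellg s F Nx j = (if j = 0 then s * F (xbar Nx 1) else if Nx < j then s * F (xbar Nx Nx) else F (xbar Nx j))"

lemma cell_odd_g: "cell_odd f Nx t j = cellg (-1) (\<lambda>y. f y t) Nx j"
  by (simp add: cell_odd_def cellg_def)
lemma cell_even_g: "cell_even f Nx t j = cellg 1 (\<lambda>y. f y t) Nx j"
  by (simp add: cell_even_def cellg_def)

lemma sq_bound: fixes a b :: real assumes "\<bar>a\<bar> \<le> b" shows "a^2 \<le> b^2"
proof -
  have "\<bar>a\<bar>^2 \<le> b^2" by (rule power_mono[OF assms abs_ge_zero])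
  then show ?thesis by simp
qed

lemma abs3: fixes a b c d B C E :: real
  assumes "a = b + c + d" "\<bar>b\<bar> \<le> B" "\<bar>c\<bar> \<le> C" "\<bar>d\<bar> \<le> E" shows "\<bar>a\<bar> \<le> B + C + E"
  using assms by linarith

lemma wall:
  fixes F F' :: "real \<Rightarrow> real"
  assumes d: "\<And>y. (F has_real_derivative F' y) (at y)"
   and lip: "\<And>y z. 0\<le>y \<Longrightarrow> y\<le>1 \<Longrightarrow> 0\<le>z \<Longrightarrow> z\<le>1 \<Longrightarrow> \<bar>F' z - F' y\<bar> \<le> L*\<bar>z-y\<bar>"
   and w: "0\<le>w" "w\<le>1" and xb: "0\<le>xb" "xb\<le>1" and x: "0\<le>x" "x\<le>1"
   and h1: "\<bar>xb - w\<bar> \<le> h/2" and h2: "\<bar>x-w\<bar> \<le> h" and h3: "\<bar>(2*w - xb) - x\<bar> \<le> 3*h/2"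
   and par: "(s = -1 \<and> F w = 0) \<or> (s = 1 \<and> F' w = 0)"
  shows "\<bar>s * F xb - F x - F' x * ((2*w - xb) - x)\<bar> \<le> 3*L*h^2"
proof -
  have L: "0 \<le> L" by (rule lip_nonneg[OF lip])
  define R1 where "R1 = F xb - F w - F' w * (xb - w)"
  define R2 where "R2 = F x - F w - F' w * (x - w)"
  define D where "D = F' x - F' w"
  have "\<bar>R1\<bar> \<le> L*(xb-w)^2" unfolding R1_def by (rule taylor2[OF d lip w xb])
  also have "\<dots> \<le> L*(h/2)^2" using L sq_bound[OF h1] by (intro mult_left_mono)
  finally have r1: "\<bar>R1\<bar> \<le> L*h^2/4" by (simp add: power_divide)
  have "\<bar>R2\<bar> \<le> L*(x-w)^2" unfolding R2_def by (rule taylor2[OF d lip w x])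
  also have "\<dots> \<le> L*h^2" using L sq_bound[OF h2] by (intro mult_left_mono)
  finally have r2: "\<bar>R2\<bar> \<le> L*h^2" .
  have "\<bar>D\<bar> \<le> L*\<bar>x-w\<bar>" unfolding D_def using lip[OF w x] .
  also have "\<dots> \<le> L*h" using L h2 by (intro mult_left_mono)
  finally have dD: "\<bar>D\<bar> \<le> L*h" .
  have "\<bar>D * ((2*w - xb) - x)\<bar> \<le> (L*h) * (3*h/2)"
    unfolding abs_mult using dD h3 L by (intro mult_mono) auto
  then have r3: "\<bar>D * ((2*w - xb) - x)\<bar> \<le> 3/2*L*h^2" by (simp add: power2_eq_square algebra_simps)
  have Lh: "0 \<le> L*h^2" using L by simp
  have r3': "\<bar>D * ((2*w - xb) - x)\<bar> \<le> 3/2*(L*h^2)" using r3 by (simp add: mult.assoc)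
  have g: "3*L*h^2 = 3*(L*h^2)" by simp
  from par show ?thesis
  proof
    assume p: "s = -1 \<and> F w = 0"
    have e: "s * F xb - F x - F' x * ((2*w - xb) - x) = (- R1) + (- R2) + (- (D * ((2*w - xb) - x)))"
      using p unfolding R1_def R2_def D_def by (simp add: algebra_simps)
    show ?thesis using abs3[OF e _ _ _, of "L*h^2/4" "L*h^2" "3/2*(L*h^2)"] r1 r2 r3' Lh by simp
  next
    assume p: "s = 1 \<and> F' w = 0"
    have e: "s * F xb - F x - F' x * ((2*w - xb) - x) = R1 + (- R2) + (- (D * ((2*w - xb) - x)))"
      using p unfolding R1_def R2_def D_def by (simp add: algebra_simps)
    show ?thesis using abs3[OF e _ _ _, of "L*h^2/4" "L*h^2" "3/2*(L*h^2)"] r1 r2 r3' Lh by simp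
  qed
qed



lemma mesh_facts:
  assumes "0 < Nx"
  shows "0 < mesh_dx Nx" "mesh_dx Nx \<le> 1" "real Nx * mesh_dx Nx = 1"
    "\<And>j. xbar Nx j = (real j - 1/2) * mesh_dx Nx"
  using assms by (auto simp: mesh_dx_def xbar_def)

lemma grid:
  fixes F F' :: "real \<Rightarrow> real"
  assumes d: "\<And>y. (F has_real_derivative F' y) (at y)"
   and lip: "\<And>y z. 0\<le>y \<Longrightarrow> y\<le>1 \<Longrightarrow> 0\<le>z \<Longrightarrow> z\<le>1 \<Longrightarrow> \<bar>F' z - F' y\<bar> \<le> L*\<bar>z-y\<bar>"
   and Nx: "0 < Nx" and x: "0\<le>x" "x\<le>1" and j: "j \<le> Nx+1"
   and near: "\<bar>xbar Nx j - x\<bar> \<le> 3*mesh_dx Nx/2"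
   and par: "(s = -1 \<and> F 0 = 0 \<and> F 1 = 0) \<or> (s = 1 \<and> F' 0 = 0 \<and> F' 1 = 0)"
  shows "\<bar>cellg s F Nx j - F x - F' x * (xbar Nx j - x)\<bar> \<le> 3*L*(mesh_dx Nx)^2"
proof -
  define h where "h = mesh_dx Nx"
  have h: "0 < h" "h \<le> 1" "real Nx * h = 1" "\<And>j. xbar Nx j = (real j - 1/2) * h"
    using mesh_facts[OF Nx] by (auto simp: h_def)
  have L: "0 \<le> L" by (rule lip_nonneg[OF lip])
  consider "j = 0" | "j = Nx+1" | "1 \<le> j" "j \<le> Nx" using j by linarith
  then show ?thesis
  proof cases
    case 1
    have xb: "xbar Nx 1 = h/2" "xbar Nx j = 2*0 - xbar Nx 1" using h(4) 1 by auto
    have "\<bar>s * F (xbar Nx 1) - F x - F' x * ((2*0 - xbar Nx 1) - x)\<bar> \<le> 3*L*h^2"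
      apply (rule wall[OF d lip])
      using h x near xb par 1 by (auto simp: h_def)
    then show ?thesis using 1 xb by (simp add: cellg_def h_def)
  next
    case 2
    have xb: "xbar Nx Nx = 1 - h/2" "xbar Nx j = 2*1 - xbar Nx Nx"
      using h(3) h(4)[of Nx] h(4)[of "Nx+1"] 2 by (auto simp: algebra_simps)
    have "\<bar>s * F (xbar Nx Nx) - F x - F' x * ((2*1 - xbar Nx Nx) - x)\<bar> \<le> 3*L*h^2"
      apply (rule wall[OF d lip])
      using h x near xb par 2 by (auto simp: h_def)
    then show ?thesis using 2 xb by (simp add: cellg_def h_def)
  next
    case 3
    have z: "0 \<le> xbar Nx j" "xbar Nx j \<le> 1"
    proof -
      have "real j \<ge> 1" using 3 by simp
      then show "0 \<le> xbar Nx j" using h by simp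
      have "real j \<le> real Nx" using 3 by simp
      then have "(real j - 1/2) * h \<le> real Nx * h" using h by (intro mult_right_mono) auto
      then show "xbar Nx j \<le> 1" using h by simp
    qed
    have "\<bar>F (xbar Nx j) - F x - F' x * (xbar Nx j - x)\<bar> \<le> L*(xbar Nx j - x)^2"
      by (rule taylor2[OF d lip x z])
    also have "\<dots> \<le> L*(3*h/2)^2" using L sq_bound[OF near] by (intro mult_left_mono) (auto simp: h_def)
    also have "\<dots> \<le> 3*L*h^2" using L by (simp add: power2_eq_square algebra_simps)
    finally show ?thesis using 3 by (simp add: cellg_def h_def)
  qed
qed

lemma Est:
  fixes a :: "nat \<Rightarrow> real" and X :: "nat \<Rightarrow> real"
  assumes i: "1 \<le> i" and h: "0 < h" and X: "\<And>j. X j = (real j - 1/2)*h"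
    and R: "\<And>j. j \<in> {i-1, i, i+1} \<Longrightarrow> \<bar>a j - F0 - F1*(X j - x)\<bar> \<le> c"
  shows "\<bar>(a (i+1) - a (i-1))/(2*h) - F1\<bar> \<le> c/h" "\<bar>a (i+1) + a (i-1) - 2*a i\<bar> \<le> 4*c"
proof -
  define R where "R j = a j - F0 - F1*(X j - x)" for j
  have Xp: "X (i+1) = X i + h" using X[of "i+1"] X[of i] by (simp add: algebra_simps)
  have Xm: "X (i-1) = X i - h" using X[of "i-1"] X[of i] i by (simp add: of_nat_diff algebra_simps)
  have Rb: "\<bar>R (i+1)\<bar> \<le> c" "\<bar>R (i-1)\<bar> \<le> c" "\<bar>R i\<bar> \<le> c" using R unfolding R_def by auto
  have "(a (i+1) - a (i-1))/(2*h) - F1 = (R (i+1) - R (i-1))/(2*h)"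
    using h unfolding R_def Xp Xm by (simp add: field_simps)
  also have "\<bar>\<dots>\<bar> \<le> (2*c)/(2*h)"
  proof -
    have q: "\<bar>R (i+1) - R (i-1)\<bar> \<le> 2*c" using Rb by linarith
    show ?thesis using divide_right_mono[OF q, of "2*h"] h by (simp add: abs_div)
  qed
  finally show "\<bar>(a (i+1) - a (i-1))/(2*h) - F1\<bar> \<le> c/h" by simp
  have "a (i+1) + a (i-1) - 2*a i = R (i+1) + R (i-1) - 2 * R i"
    unfolding R_def Xp Xm by (simp add: algebra_simps)
  then show "\<bar>a (i+1) + a (i-1) - 2*a i\<bar> \<le> 4*c" using Rb by linarith
qed



lemma pdx_diff:
  assumes "C1fun f" "C1fun g"
  shows "pdx (\<lambda>x t. f x t - c * g x t) x t = pdx f x t - c * pdx g x t"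
  unfolding pdx_def[of "\<lambda>x t. f x t - c * g x t"]
  by (rule DERIV_imp_deriv) (intro DERIV_diff DERIV_cmult C1_dx assms)

lemma pdt_diff:
  assumes "C1fun f" "C1fun g"
  shows "pdt (\<lambda>x t. f x t - c * g x t) x t = pdt f x t - c * pdt g x t"
  unfolding pdt_def[of "\<lambda>x t. f x t - c * g x t"]
  by (rule DERIV_imp_deriv) (intro DERIV_diff DERIV_cmult C1_dt assms)

lemma int_bound:
  fixes f :: "real \<Rightarrow> real"
  assumes "\<And>x. x\<in>{0..1} \<Longrightarrow> f x \<le> M" "0 \<le> M"
  shows "integral {0..1} f \<le> M"
proof (cases "f integrable_on {0..1}")
  case True
  have "integral {0..1} f \<le> integral {0..1} (\<lambda>_::real. M)"
    using assms by (intro integral_le True) auto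
  then show ?thesis by simp
next
  case False
  then show ?thesis using assms by (simp add: not_integrable_integral)
qed

lemma cell_of_props:
  assumes Nx: "0 < Nx" and x: "0 \<le> x" "x \<le> 1"
  shows "1 \<le> cell_of Nx x \<and> cell_of Nx x \<le> Nx \<and> \<bar>xbar Nx (cell_of Nx x) - x\<bar> \<le> mesh_dx Nx/2"
proof -
  define k where "k = \<lfloor>x * real Nx\<rfloor>"
  have k0: "0 \<le> k" unfolding k_def using x by simp
  have kl: "real_of_int k \<le> x * real Nx" "x * real Nx < real_of_int k + 1" unfolding k_def by linarith+
  have xN: "x * real Nx \<le> real Nx" using x Nx by simp
  have N: "real Nx > 0" using Nx by simp
  show ?thesis
  proof (cases "nat k + 1 \<le> Nx")
    case True
    then have ci: "cell_of Nx x = nat k + 1" by (simp add: cell_of_def k_def)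
    have r: "real (nat k + 1) = real_of_int k + 1" using k0 by simp
    have "\<bar>(real_of_int k + 1/2) - x * real Nx\<bar> \<le> 1/2" using kl by linarith
    then have "\<bar>(real_of_int k + 1/2) - x * real Nx\<bar> / real Nx \<le> (1/2) / real Nx"
      using N by (intro divide_right_mono) auto
    moreover have "\<bar>(real_of_int k + 1/2) - x * real Nx\<bar> / real Nx = \<bar>xbar Nx (nat k + 1) - x\<bar>"
      using N r by (simp add: xbar_def mesh_dx_def abs_div[symmetric] field_simps)
    ultimately show ?thesis using ci True by (simp add: mesh_dx_def)
  next
    case False
    then have ci: "cell_of Nx x = Nx" by (simp add: cell_of_def k_def)
    have "real_of_int k \<ge> real Nx" using False k0 by linarith
    then have "x * real Nx = real Nx" using kl xN by linarith
    then have x1: "x = 1" using N by simp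
    show ?thesis using ci x1 Nx by (simp add: xbar_def mesh_dx_def field_simps)
  qed
qed

lemma abs2: fixes a b d X Y :: real shows "\<bar>a - d\<bar> \<le> X \<Longrightarrow> \<bar>b\<bar> \<le> Y \<Longrightarrow> \<bar>a + b - d\<bar> \<le> X + Y" by arith

lemma combine:
  fixes A S D h c L cfl :: real
  assumes "\<bar>A/(2*h) - D\<bar> \<le> c/h" "\<bar>S\<bar> \<le> 4*c" "c = 3*L*h^2" "0 < h" "0 < cfl" "0 \<le> L"
  shows "\<bar>A/(2*h) + S/(2*cfl*h) - D\<bar> \<le> L*h*(3+6/cfl)"
proof -
  have c1: "c/h = 3*L*h" using assms(3,4) by (simp add: power2_eq_square)
  have "\<bar>S/(2*cfl*h)\<bar> = \<bar>S\<bar>/(2*cfl*h)" using assms by (simp add: abs_div)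
  also have "\<dots> \<le> (12*L*h^2)/(2*cfl*h)" using assms by (intro divide_right_mono) auto
  also have "\<dots> = L*h*(6/cfl)" using assms by (simp add: power2_eq_square field_simps)
  finally have "\<bar>S/(2*cfl*h)\<bar> \<le> L*h*(6/cfl)" .
  moreover have eq: "L*h*(3+6/cfl) = c/h + L*h*(6/cfl)" using c1 by (simp add: algebra_simps)
  ultimately show ?thesis using assms(1) abs2 unfolding eq by blast
qed



theorem lemma5:
  fixes v u :: "real \<Rightarrow> real \<Rightarrow> real \<Rightarrow> real"   \<comment> \<open>v \<epsilon> x t, u \<epsilon> x t\<close>
    and g v2 u2 :: "real \<Rightarrow> real \<Rightarrow> real"
    and cfl :: real
  assumes smooth: "\<And>e. 0 < e \<Longrightarrow> e < 1 \<Longrightarrow> C2fun (v e) \<and> C2fun (u e)"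
    and smooth_g: "C1fun g"
    and smooth_lim: "C2fun v2" "C2fun u2"
    and pde: "\<And>e x t. 0 < e \<Longrightarrow> e < 1 \<Longrightarrow> x \<in> {0..1} \<Longrightarrow> 0 \<le> t \<Longrightarrow>
               pdt (v e) x t - pdx (u e) x t = 0 \<and>
               pdt (u e) x t - pdx (v e) x t / e\<^sup>2 = g x t"
    and bc: "\<And>e t. 0 < e \<Longrightarrow> e < 1 \<Longrightarrow> 0 \<le> t \<Longrightarrow> v e 0 t = 0 \<and> v e 1 t = 0"
    and A1: "\<exists>K. \<forall>e. 0 < e \<and> e < 1 \<longrightarrow>
               C1norm_le (\<lambda>x t. v e x t - e\<^sup>2 * v2 x t) (K * e ^ 3) \<and>
               C1norm_le (\<lambda>x t. pdx (u e) x t - e\<^sup>2 * pdx u2 x t) (K * e ^ 3)"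
    and A2: "0 < cfl" "cfl < 1"
  shows "\<forall>T > 0. \<exists>C. \<forall>e Nx n. 0 < e \<and> e < 1 \<and> 0 < Nx \<and>
           real n * (cfl * mesh_dx Nx) \<le> T \<longrightarrow>
           L2_err (v e) (u e) Nx (cfl * mesh_dx Nx) (real n * (cfl * mesh_dx Nx))
             \<le> C * (e\<^sup>2 * mesh_dx Nx)"
proof (intro allI impI)
  fix T :: real assume T: "T > 0"
  obtain K where K: "\<And>e. 0 < e \<Longrightarrow> e < 1 \<Longrightarrow> C1norm_le (\<lambda>x t. pdx (u e) x t - e\<^sup>2 * pdx u2 x t) (K * e ^ 3)"
    using A1 by blast
  have c2u2: "C1fun (pdx u2)" using smooth_lim(2) by (simp add: C2fun_def)
  obtain B1 where B1: "\<forall>x t. 0\<le>x \<and> x\<le>1 \<and> 0\<le>t \<and> t\<le>T+1 \<longrightarrow> \<bar>pdx (pdx u2) x t\<bar> \<le> B1"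
    using cont_bound[of "pdx (pdx u2)" "T+1"] c2u2 by (auto simp: C1fun_def)
  obtain B2 where B2: "\<forall>x t. 0\<le>x \<and> x\<le>1 \<and> 0\<le>t \<and> t\<le>T+1 \<longrightarrow> \<bar>pdt (pdx u2) x t\<bar> \<le> B2"
    using cont_bound[of "pdt (pdx u2)" "T+1"] c2u2 by (auto simp: C1fun_def)
  obtain B3 where B3: "\<forall>x t. 0\<le>x \<and> x\<le>1 \<and> 0\<le>t \<and> t\<le>T+1 \<longrightarrow> \<bar>pdx g x t\<bar> \<le> B3"
    using cont_bound[of "pdx g" "T+1"] smooth_g by (auto simp: C1fun_def)
  define K' where "K' = \<bar>K\<bar>"
  define M where "M = \<bar>B2\<bar> + K'"
  define L0 where "L0 = \<bar>B1\<bar> + \<bar>B2\<bar> + \<bar>B3\<bar> + 2*K'"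
  have K'0: "0 \<le> K'" by (simp add: K'_def)
  have L0: "0 \<le> L0" by (simp add: L0_def K'_def)

  have uxx: "\<bar>pdx (pdx (u e)) x t\<bar> \<le> e\<^sup>2*L0 \<and> \<bar>pdt (pdx (u e)) x t\<bar> \<le> M"
    if e: "0<e" "e<1" and x: "0\<le>x" "x\<le>1" and t: "0\<le>t" "t\<le>T+1" for e x t
  proof -
    have cu: "C1fun (pdx (u e))" using smooth[OF e] by (simp add: C2fun_def)
    have cn: "C1norm_le (\<lambda>x t. pdx (u e) x t - e\<^sup>2 * pdx u2 x t) (K*e^3)" using K[OF e] .
    have h: "\<bar>pdx (pdx (u e)) x t - e\<^sup>2 * pdx (pdx u2) x t\<bar> \<le> K*e^3"
            "\<bar>pdt (pdx (u e)) x t - e\<^sup>2 * pdt (pdx u2) x t\<bar> \<le> K*e^3"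
      using C1norm_D[OF cn x t(1)] pdx_diff[OF cu c2u2] pdt_diff[OF cu c2u2] by auto
    have e32: "e^3 \<le> e^2" using e by (intro power_decreasing) auto
    have "K*e^3 \<le> K'*e^3" unfolding K'_def using e by (intro mult_right_mono) auto
    also have "\<dots> \<le> K'*e^2" using K'0 e32 by (intro mult_left_mono)
    finally have Ke: "K*e^3 \<le> K'*e^2" .
    have e21: "e^2 \<le> 1" using e by (simp add: power_le_one)
    have e20: "0 \<le> e^2" by simp
    have b1: "\<bar>e\<^sup>2 * pdx (pdx u2) x t\<bar> \<le> e^2 * \<bar>B1\<bar>"
    proof -
      have "\<bar>pdx (pdx u2) x t\<bar> \<le> \<bar>B1\<bar>" using B1 x t by force
      then show ?thesis by (simp add: abs_mult mult_left_mono)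
    qed
    have b2: "\<bar>e\<^sup>2 * pdt (pdx u2) x t\<bar> \<le> e^2 * \<bar>B2\<bar>"
    proof -
      have "\<bar>pdt (pdx u2) x t\<bar> \<le> \<bar>B2\<bar>" using B2 x t by force
      then show ?thesis by (simp add: abs_mult mult_left_mono)
    qed
    have b2': "e^2 * \<bar>B2\<bar> \<le> \<bar>B2\<bar>" using e21 by (simp add: mult_left_le_one_le)
    have k1: "K'*e^2 \<le> K'" using e21 K'0 by (simp add: mult_left_le)
    have L0e: "e\<^sup>2*L0 = e^2*\<bar>B1\<bar> + K'*e^2 + e^2*(\<bar>B2\<bar> + \<bar>B3\<bar> + K')" by (simp add: L0_def algebra_simps)
    have r: "0 \<le> e^2*(\<bar>B2\<bar> + \<bar>B3\<bar> + K')" using K'0 by simp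
    show ?thesis
      using h b1 b2 b2' k1 Ke L0e r unfolding M_def by (smt (verit))
  qed

  have Ulip: "\<bar>pdx (u e) z t - pdx (u e) y t\<bar> \<le> (e\<^sup>2*L0)*\<bar>z-y\<bar>"
    if e: "0<e" "e<1" and t: "0\<le>t" "t\<le>T" and y: "0\<le>y" "y\<le>1" and z: "0\<le>z" "z\<le>1" for e t y z
  proof -
    have cu: "C1fun (pdx (u e))" using smooth[OF e] by (simp add: C2fun_def)
    show ?thesis
    proof (rule mvt_bound[where f="\<lambda>\<xi>. pdx (u e) \<xi> t" and f'="\<lambda>\<xi>. pdx (pdx (u e)) \<xi> t"])
      fix \<xi> show "((\<lambda>\<xi>. pdx (u e) \<xi> t) has_real_derivative pdx (pdx (u e)) \<xi> t) (at \<xi>)"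
        by (rule C1_dx[OF cu])
    next
      fix \<xi> assume "min y z \<le> \<xi>" "\<xi> \<le> max y z"
      then have "0 \<le> \<xi>" "\<xi> \<le> 1" using y z by (auto simp: min_def max_def split: if_splits)
      then show "\<bar>pdx (pdx (u e)) \<xi> t\<bar> \<le> e\<^sup>2*L0" using uxx[OF e] t by auto
    qed
  qed

  have Utlip: "\<bar>pdt (u e) z t - pdt (u e) y t\<bar> \<le> M*\<bar>z-y\<bar>"
    if e: "0<e" "e<1" and t: "0\<le>t" "t\<le>T" and y: "0\<le>y" "y\<le>1" and z: "0\<le>z" "z\<le>1" for e t y z
  proof -
    have cu0: "C1fun (u e)" using smooth[OF e] by (simp add: C2fun_def)
    have cu: "C1fun (pdx (u e))" using smooth[OF e] by (simp add: C2fun_def)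
    show ?thesis
    proof (rule deriv_right_bound[where \<phi>="\<lambda>s. u e z s - u e y s"])
      show "((\<lambda>s. u e z s - u e y s) has_real_derivative pdt (u e) z t - pdt (u e) y t) (at t)"
        by (intro DERIV_diff C1_dt cu0)
    next
      fix r :: real assume r: "0 < r" "r \<le> 1"
      have "abs ((u e z (t+r) - u e z t) - (u e y (t+r) - u e y t)) \<le> M*r*abs (z-y)"
      proof (rule mvt_bound[where f="\<lambda>\<zeta>. u e \<zeta> (t+r) - u e \<zeta> t"
                              and f'="\<lambda>\<zeta>. pdx (u e) \<zeta> (t+r) - pdx (u e) \<zeta> t"])
        fix \<zeta> show "((\<lambda>\<zeta>. u e \<zeta> (t+r) - u e \<zeta> t) has_real_derivative pdx (u e) \<zeta> (t+r) - pdx (u e) \<zeta> t) (at \<zeta>)"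
          by (intro DERIV_diff C1_dx cu0)
      next
        fix \<zeta> assume "min y z \<le> \<zeta>" "\<zeta> \<le> max y z"
        then have \<zeta>: "0 \<le> \<zeta>" "\<zeta> \<le> 1" using y z by (auto simp: min_def max_def split: if_splits)
        have "\<bar>pdx (u e) \<zeta> (t+r) - pdx (u e) \<zeta> t\<bar> \<le> M*\<bar>(t+r) - t\<bar>"
        proof (rule mvt_bound[where f="\<lambda>\<tau>. pdx (u e) \<zeta> \<tau>" and f'="\<lambda>\<tau>. pdt (pdx (u e)) \<zeta> \<tau>"])
          fix \<tau> show "((\<lambda>\<tau>. pdx (u e) \<zeta> \<tau>) has_real_derivative pdt (pdx (u e)) \<zeta> \<tau>) (at \<tau>)"
            by (rule C1_dt[OF cu])
        next
          fix \<tau> assume "min t (t+r) \<le> \<tau>" "\<tau> \<le> max t (t+r)"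
          then have "0 \<le> \<tau>" "\<tau> \<le> T+1" using r t by (auto simp: min_def max_def split: if_splits)
          then show "\<bar>pdt (pdx (u e)) \<zeta> \<tau>\<bar> \<le> M" using uxx[OF e \<zeta>] by auto
        qed
        then show "\<bar>pdx (u e) \<zeta> (t+r) - pdx (u e) \<zeta> t\<bar> \<le> M*r" using r by simp
      qed
      then show "abs ((u e z (t+r) - u e y (t+r)) - (u e z t - u e y t)) \<le> M*abs (z-y) * r"
        by (simp add: algebra_simps)
    qed
  qed

  have glip: "\<bar>g z t - g y t\<bar> \<le> \<bar>B3\<bar>*\<bar>z-y\<bar>"
    if t: "0\<le>t" "t\<le>T" and y: "0\<le>y" "y\<le>1" and z: "0\<le>z" "z\<le>1" for t y z
  proof (rule mvt_bound[where f="\<lambda>\<xi>. g \<xi> t" and f'="\<lambda>\<xi>. pdx g \<xi> t"])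
    fix \<xi> show "((\<lambda>\<xi>. g \<xi> t) has_real_derivative pdx g \<xi> t) (at \<xi>)" by (rule C1_dx[OF smooth_g])
  next
    fix \<xi> assume "min y z \<le> \<xi>" "\<xi> \<le> max y z"
    then have "0 \<le> \<xi>" "\<xi> \<le> 1" using y z by (auto simp: min_def max_def split: if_splits)
    then show "\<bar>pdx g \<xi> t\<bar> \<le> \<bar>B3\<bar>" using B3 t by force
  qed

  have Vx: "pdx (v e) x t = e\<^sup>2 * (pdt (u e) x t - g x t)"
    if e: "0<e" "e<1" and x: "0\<le>x" "x\<le>1" and t: "0\<le>t" for e x t
  proof -
    have "pdt (u e) x t - pdx (v e) x t / e\<^sup>2 = g x t" using pde[OF e _ t] x by auto
    then show ?thesis using e by (simp add: field_simps)
  qed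

  have Vlip: "\<bar>pdx (v e) z t - pdx (v e) y t\<bar> \<le> (e\<^sup>2*L0)*\<bar>z-y\<bar>"
    if e: "0<e" "e<1" and t: "0\<le>t" "t\<le>T" and y: "0\<le>y" "y\<le>1" and z: "0\<le>z" "z\<le>1" for e t y z
  proof -
    have "pdx (v e) z t - pdx (v e) y t = e\<^sup>2 * ((pdt (u e) z t - pdt (u e) y t) - (g z t - g y t))"
      using Vx[OF e y t(1)] Vx[OF e z t(1)] by (simp add: algebra_simps)
    then have "\<bar>pdx (v e) z t - pdx (v e) y t\<bar> = e\<^sup>2 * \<bar>(pdt (u e) z t - pdt (u e) y t) - (g z t - g y t)\<bar>"
      by (simp add: abs_mult)
    also have "\<dots> \<le> e\<^sup>2 * (M*\<bar>z-y\<bar> + \<bar>B3\<bar>*\<bar>z-y\<bar>)"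
      using Utlip[OF e t y z] glip[OF t y z] by (intro mult_left_mono) auto
    also have "\<dots> \<le> e\<^sup>2 * (L0*\<bar>z-y\<bar>)"
    proof -
      have "M + \<bar>B3\<bar> \<le> L0" unfolding M_def L0_def using K'0 by simp
      then have "(M + \<bar>B3\<bar>)*\<bar>z-y\<bar> \<le> L0*\<bar>z-y\<bar>" by (intro mult_right_mono) auto
      then show ?thesis by (intro mult_left_mono) (auto simp: algebra_simps)
    qed
    finally show ?thesis by (simp add: mult.assoc)
  qed

  have ub: "pdx (u e) w t = 0"
    if e: "0<e" "e<1" and t: "0\<le>t" and w: "w = 0 \<or> w = 1" for e t w
  proof -
    have cv: "C1fun (v e)" using smooth[OF e] by (simp add: C2fun_def)
    have "\<bar>pdt (v e) w t\<bar> \<le> 0"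
    proof (rule deriv_right_bound[where \<phi>="\<lambda>s. v e w s"])
      show "((\<lambda>s. v e w s) has_real_derivative pdt (v e) w t) (at t)" by (rule C1_dt[OF cv])
    next
      fix s :: real assume "0 < s" "s \<le> 1"
      then show "\<bar>v e w (t+s) - v e w t\<bar> \<le> 0 * s" using bc[OF e, of t] bc[OF e, of "t+s"] w t by auto
    qed
    then show ?thesis using pde[OF e, of w t] w t by auto
  qed

  show "\<exists>C. \<forall>e Nx n. 0 < e \<and> e < 1 \<and> 0 < Nx \<and>
           real n * (cfl * mesh_dx Nx) \<le> T \<longrightarrow>
           L2_err (v e) (u e) Nx (cfl * mesh_dx Nx) (real n * (cfl * mesh_dx Nx))
             \<le> C * (e\<^sup>2 * mesh_dx Nx)"
  proof (intro exI[of _ "2*(L0*(3+6/cfl))"] allI impI, elim conjE)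
    fix e :: real and Nx n
    assume e: "0 < e" "e < 1" and Nx: "0 < Nx" and tT: "real n * (cfl * mesh_dx Nx) \<le> T"
    define h where "h = mesh_dx Nx"
    define t where "t = real n * (cfl * h)"
    have h: "0 < h" "\<And>j. xbar Nx j = (real j - 1/2) * h" using mesh_facts[OF Nx] by (auto simp: h_def)
    have t: "0 \<le> t" "t \<le> T" using tT h A2 by (auto simp: t_def h_def)
    define L where "L = e\<^sup>2*L0"
    have L: "0 \<le> L" using L0 by (simp add: L_def)
    define E where "E = L*h*(3+6/cfl)"
    have E: "0 \<le> E" using L h A2 by (simp add: E_def)
    have cv: "C1fun (v e)" and cu: "C1fun (u e)" using smooth[OF e] by (auto simp: C2fun_def)
    have point: "\<bar>pdx (v e) x t - vx_tilde (v e) (u e) Nx (cfl*h) t (cell_of Nx x)\<bar> \<le> E \<and>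
                 \<bar>pdx (u e) x t - ux_tilde (v e) (u e) Nx (cfl*h) t (cell_of Nx x)\<bar> \<le> E"
      if x: "0 \<le> x" "x \<le> 1" for x
    proof -
      define i where "i = cell_of Nx x"
      have i: "1 \<le> i" "i \<le> Nx" "\<bar>xbar Nx i - x\<bar> \<le> h/2" using cell_of_props[OF Nx x] by (auto simp: i_def h_def)
      have near: "j \<le> Nx+1 \<and> \<bar>xbar Nx j - x\<bar> \<le> 3*mesh_dx Nx/2" if j: "j \<in> {i-1, i, i+1}" for j
      proof -
        have xp: "xbar Nx (i+1) = xbar Nx i + h" and xm: "xbar Nx (i-1) = xbar Nx i - h"
          using h(2)[of "i+1"] h(2)[of i] h(2)[of "i-1"] i(1) by (auto simp: of_nat_diff algebra_simps)
        have "\<bar>xbar Nx j - x\<bar> \<le> 3*h/2"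
        proof -
          consider "j = i-1" | "j = i" | "j = i+1" using j by blast
          then show ?thesis
          proof cases
            case 1 show ?thesis using i(3)[unfolded abs_le_iff] h(1) unfolding 1 xm abs_le_iff by linarith
          next
            case 2 show ?thesis using i(3)[unfolded abs_le_iff] h(1) unfolding 2 abs_le_iff by linarith
          next
            case 3 show ?thesis using i(3)[unfolded abs_le_iff] h(1) unfolding 3 xp abs_le_iff by linarith
          qed
        qed
        moreover have "j \<le> Nx+1" using j i by auto
        ultimately show ?thesis by (simp add: h_def)
      qed
      have dV: "\<And>y. ((\<lambda>y. v e y t) has_real_derivative pdx (v e) y t) (at y)" by (rule C1_dx[OF cv])
      have dU: "\<And>y. ((\<lambda>y. u e y t) has_real_derivative pdx (u e) y t) (at y)" by (rule C1_dx[OF cu])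
      have lV: "\<And>y z. 0\<le>y \<Longrightarrow> y\<le>1 \<Longrightarrow> 0\<le>z \<Longrightarrow> z\<le>1 \<Longrightarrow> \<bar>pdx (v e) z t - pdx (v e) y t\<bar> \<le> L*\<bar>z-y\<bar>"
        unfolding L_def using Vlip[OF e t] by blast
      have lU: "\<And>y z. 0\<le>y \<Longrightarrow> y\<le>1 \<Longrightarrow> 0\<le>z \<Longrightarrow> z\<le>1 \<Longrightarrow> \<bar>pdx (u e) z t - pdx (u e) y t\<bar> \<le> L*\<bar>z-y\<bar>"
        unfolding L_def using Ulip[OF e t] by blast
      have parV: "((-1::real) = -1 \<and> v e 0 t = 0 \<and> v e 1 t = 0) \<or> ((-1::real) = 1 \<and> pdx (v e) 0 t = 0 \<and> pdx (v e) 1 t = 0)"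
        using bc[OF e t(1)] by simp
      have parU: "((1::real) = -1 \<and> u e 0 t = 0 \<and> u e 1 t = 0) \<or> ((1::real) = 1 \<and> pdx (u e) 0 t = 0 \<and> pdx (u e) 1 t = 0)"
        using ub[OF e t(1)] by simp
      define aV where "aV = cellg (-1) (\<lambda>y. v e y t) Nx"
      define aU where "aU = cellg 1 (\<lambda>y. u e y t) Nx"
      have RV: "\<bar>aV j - v e x t - pdx (v e) x t * (xbar Nx j - x)\<bar> \<le> 3*L*h^2" if "j \<in> {i-1, i, i+1}" for j
        unfolding aV_def h_def using grid[OF dV lV Nx x _ _ parV] near[OF that] by blast
      have RU: "\<bar>aU j - u e x t - pdx (u e) x t * (xbar Nx j - x)\<bar> \<le> 3*L*h^2" if "j \<in> {i-1, i, i+1}" for j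
        unfolding aU_def h_def using grid[OF dU lU Nx x _ _ parU] near[OF that] by blast
      note EV = Est[OF i(1) h(1) h(2) RV]
      note EU = Est[OF i(1) h(1) h(2) RU]
      have vt: "vx_tilde (v e) (u e) Nx (cfl*h) t i = (aV (i+1) - aV (i-1))/(2*h) + (aU (i+1) + aU (i-1) - 2*aU i)/(2*cfl*h)"
        unfolding vx_tilde_def aV_def aU_def cell_odd_g cell_even_g h_def[symmetric]
        using h(1) A2(1) by (simp add: field_simps)
      have ut: "ux_tilde (v e) (u e) Nx (cfl*h) t i = (aU (i+1) - aU (i-1))/(2*h) + (aV (i+1) + aV (i-1) - 2*aV i)/(2*cfl*h)"
        unfolding ux_tilde_def aV_def aU_def cell_odd_g cell_even_g h_def[symmetric]
        using h(1) A2(1) by (simp add: field_simps)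
      have "\<bar>vx_tilde (v e) (u e) Nx (cfl*h) t i - pdx (v e) x t\<bar> \<le> E"
        unfolding vt E_def by (rule combine[OF EV(1) EU(2) refl h(1) A2(1) L])
      moreover have "\<bar>ux_tilde (v e) (u e) Nx (cfl*h) t i - pdx (u e) x t\<bar> \<le> E"
        unfolding ut E_def by (rule combine[OF EU(1) EV(2) refl h(1) A2(1) L])
      ultimately show ?thesis by (simp add: i_def abs_minus_commute)
    qed
    have "integral {0..1} (\<lambda>x. (pdx (v e) x t - vx_tilde (v e) (u e) Nx (cfl*h) t (cell_of Nx x))\<^sup>2
        + (pdx (u e) x t - ux_tilde (v e) (u e) Nx (cfl*h) t (cell_of Nx x))\<^sup>2) \<le> (2*E)^2"
    proof (rule int_bound)
      fix x :: real assume "x \<in> {0..1}"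
      then have p: "\<bar>pdx (v e) x t - vx_tilde (v e) (u e) Nx (cfl*h) t (cell_of Nx x)\<bar> \<le> E \<and>
                 \<bar>pdx (u e) x t - ux_tilde (v e) (u e) Nx (cfl*h) t (cell_of Nx x)\<bar> \<le> E" using point by auto
      have "(pdx (v e) x t - vx_tilde (v e) (u e) Nx (cfl*h) t (cell_of Nx x))\<^sup>2 \<le> E^2"
        using sq_bound p by blast
      moreover have "(pdx (u e) x t - ux_tilde (v e) (u e) Nx (cfl*h) t (cell_of Nx x))\<^sup>2 \<le> E^2"
        using sq_bound p by blast
      moreover have "E^2 + E^2 \<le> (2*E)^2" by (simp add: power2_eq_square)
      ultimately show "(pdx (v e) x t - vx_tilde (v e) (u e) Nx (cfl*h) t (cell_of Nx x))\<^sup>2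
        + (pdx (u e) x t - ux_tilde (v e) (u e) Nx (cfl*h) t (cell_of Nx x))\<^sup>2 \<le> (2*E)^2" by linarith
    qed simp
    then have "L2_err (v e) (u e) Nx (cfl*h) t \<le> sqrt ((2*E)^2)"
      unfolding L2_err_def by (rule real_sqrt_le_mono)
    also have "\<dots> = 2*E" unfolding real_sqrt_abs using E by simp
    also have "\<dots> = 2*(L0*(3+6/cfl)) * (e\<^sup>2 * h)" by (simp add: E_def L_def algebra_simps)
    finally show "L2_err (v e) (u e) Nx (cfl * mesh_dx Nx) (real n * (cfl * mesh_dx Nx))
             \<le> 2*(L0*(3+6/cfl)) * (e\<^sup>2 * mesh_dx Nx)" by (simp add: t_def h_def)
  qed
qed

end
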